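(* For every ideal $\mathcal I$ on $\omega$ and every cardinal $\kappa$, each of the classes $(\mathcal I\text{-p},\mathcal I\text{-}\sigma\text{-u})$, $(\mathcal I\text{-p},\mathcal I\text{-qn})$ and $(\mathcal I\text{-qn},\mathcal I\text{-}\sigma\text{-u})$ contains a space of cardinality $\kappa$.
   Context: An ideal on $\omega$ is a family $\mathcal I\subseteq\mathcal P(\omega)$ closed under finite unions and subsets, containing all finite sets, with $\omega\notin\mathcal I$. A real sequence $(a_n)$ is $\mathcal I$-convergent to $0$ if $\{n:|a_n|\ge\varepsilon\}\in\mathcal I$ for all $\varepsilon>0$. For a sequence $(f_n)$ of real functions on a set $X$: $\mathcal I$-p means $(f_n(x))$ is $\mathcal I$-convergent to $0$ for each $x$; $\mathcal I$-u means $\{n:\exists x\in X\,(|f_n(x)|\ge\varepsilon)\}\in\mathcal I$ for each $\varepsilon>0$; $\mathcal I$-$\sigma$-u means $X=\bigcup_{k\in\omega}X_k$ with $(f_n\restriction X_k)$ $\mathcal I$-u convergent to $0$ for each $k$; $\mathcal I$-qn means there is a sequence $(\varepsilon_n)$ of positive reals $\mathcal I$-convergent to $0$ with $\{n:|f_n(x)|\ge\varepsilon_n\}\in\mathcal I$ for each $x$. $\mathcal C(X)$ = continuous real functions on $X$. Normal space = Hausdorff space in which disjoint closed sets have disjoint open neighbourhoods. $(\alpha,\beta)$ is the class of normal spaces $X$ such that for all sequences $(f_n)$ in $\mathcal C(X)$, $f_n\to0$ in sense $\alpha$ iff in sense $\beta$. *)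

theory Defs
  imports "HOL-Analysis.Analysis" "HOL-Library.Equipollence"
begin

definition ideal_on :: "nat set set \<Rightarrow> bool" where
  "ideal_on I \<equiv> (\<forall>A\<in>I. \<forall>B\<in>I. A \<union> B \<in> I) \<and> (\<forall>A\<in>I. \<forall>B. B \<subseteq> A \<longrightarrow> B \<in> I)
     \<and> (\<forall>A. finite A \<longrightarrow> A \<in> I) \<and> UNIV \<notin> I"

definition I_conv0 :: "nat set set \<Rightarrow> (nat \<Rightarrow> real) \<Rightarrow> bool" where
  "I_conv0 I a \<equiv> \<forall>\<epsilon>>0. {n. \<bar>a n\<bar> \<ge> \<epsilon>} \<in> I"

definition I_p :: "nat set set \<Rightarrow> 'a set \<Rightarrow> (nat \<Rightarrow> 'a \<Rightarrow> real) \<Rightarrow> bool" where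
  "I_p I S f \<equiv> \<forall>x\<in>S. I_conv0 I (\<lambda>n. f n x)"

definition I_u :: "nat set set \<Rightarrow> 'a set \<Rightarrow> (nat \<Rightarrow> 'a \<Rightarrow> real) \<Rightarrow> bool" where
  "I_u I S f \<equiv> \<forall>\<epsilon>>0. {n. \<exists>x\<in>S. \<bar>f n x\<bar> \<ge> \<epsilon>} \<in> I"

definition I_sigma_u :: "nat set set \<Rightarrow> 'a set \<Rightarrow> (nat \<Rightarrow> 'a \<Rightarrow> real) \<Rightarrow> bool" where
  "I_sigma_u I S f \<equiv> \<exists>Xk :: nat \<Rightarrow> 'a set. S = (\<Union>k. Xk k) \<and> (\<forall>k. I_u I (Xk k) f)"

definition I_qn :: "nat set set \<Rightarrow> 'a set \<Rightarrow> (nat \<Rightarrow> 'a \<Rightarrow> real) \<Rightarrow> bool" where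
  "I_qn I S f \<equiv> \<exists>e :: nat \<Rightarrow> real. (\<forall>n. e n > 0) \<and> I_conv0 I e
      \<and> (\<forall>x\<in>S. {n. \<bar>f n x\<bar> \<ge> e n} \<in> I)"

definition normal_T2 :: "'a topology \<Rightarrow> bool" where
  "normal_T2 X \<equiv> Hausdorff_space X \<and> normal_space X"

definition in_class ::
  "(nat set set \<Rightarrow> 'a set \<Rightarrow> (nat \<Rightarrow> 'a \<Rightarrow> real) \<Rightarrow> bool) \<Rightarrow>
   (nat set set \<Rightarrow> 'a set \<Rightarrow> (nat \<Rightarrow> 'a \<Rightarrow> real) \<Rightarrow> bool) \<Rightarrow>
   nat set set \<Rightarrow> 'a topology \<Rightarrow> bool" where
  "in_class \<alpha> \<beta> I X \<equiv> normal_T2 X \<and>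
     (\<forall>f :: nat \<Rightarrow> 'a \<Rightarrow> real. (\<forall>n. continuous_map X euclideanreal (f n)) \<longrightarrow>
        (\<alpha> I (topspace X) f \<longleftrightarrow> \<beta> I (topspace X) f))"

end

theory Submission
  imports Defs
begin

lemma ideal_sub: "ideal_on I \<Longrightarrow> A \<in> I \<Longrightarrow> B \<subseteq> A \<Longrightarrow> B \<in> I"
  unfolding ideal_on_def by blast
lemma ideal_un: "ideal_on I \<Longrightarrow> A \<in> I \<Longrightarrow> B \<in> I \<Longrightarrow> A \<union> B \<in> I"
  unfolding ideal_on_def by blast
lemma ideal_fin: "ideal_on I \<Longrightarrow> finite A \<Longrightarrow> A \<in> I"
  unfolding ideal_on_def by blast

lemma qn_p: assumes "ideal_on I" "I_qn I S f" shows "I_p I S f"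
proof -
  obtain e where e: "\<forall>n. e n > 0" "I_conv0 I e" "\<forall>x\<in>S. {n. \<bar>f n x\<bar> \<ge> e n} \<in> I"
    using assms(2) unfolding I_qn_def by blast
  show ?thesis unfolding I_p_def I_conv0_def
  proof (intro ballI allI impI)
    fix x and \<epsilon> :: real assume x: "x \<in> S" and "\<epsilon> > 0"
    have sub: "{n. \<bar>f n x\<bar> \<ge> \<epsilon>} \<subseteq> {n. \<bar>f n x\<bar> \<ge> e n} \<union> {n. \<bar>e n\<bar> \<ge> \<epsilon>}"
    proof
      fix n assume "n \<in> {n. \<bar>f n x\<bar> \<ge> \<epsilon>}"
      then have h: "\<bar>f n x\<bar> \<ge> \<epsilon>" by simp
      have "\<bar>f n x\<bar> \<ge> e n \<or> \<bar>e n\<bar> \<ge> \<epsilon>"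
        using h abs_ge_self[of "e n"] by linarith
      then show "n \<in> {n. \<bar>f n x\<bar> \<ge> e n} \<union> {n. \<bar>e n\<bar> \<ge> \<epsilon>}" by simp
    qed
    have i1: "{n. \<bar>e n\<bar> \<ge> \<epsilon>} \<in> I" using e(2) \<open>\<epsilon> > 0\<close> unfolding I_conv0_def by blast
    have i2: "{n. \<bar>f n x\<bar> \<ge> e n} \<in> I" using e(3) x by blast
    show "{n. \<bar>f n x\<bar> \<ge> \<epsilon>} \<in> I"
      by (rule ideal_sub[OF assms(1) ideal_un[OF assms(1) i2 i1] sub])
  qed
qed

lemma su_p: assumes "ideal_on I" "I_sigma_u I S f" shows "I_p I S f"
proof -
  obtain Xk :: "nat \<Rightarrow> _ set" where X: "S = (\<Union>k. Xk k)" "\<forall>k. I_u I (Xk k) f"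
    using assms(2) unfolding I_sigma_u_def by (elim exE conjE) (rule that; assumption)
  show ?thesis unfolding I_p_def I_conv0_def
  proof (intro ballI allI impI)
    fix x and \<epsilon> :: real assume x: "x \<in> S" and "\<epsilon> > 0"
    then obtain k where k: "x \<in> Xk k" using X by auto
    have sub: "{n. \<bar>f n x\<bar> \<ge> \<epsilon>} \<subseteq> {n. \<exists>y\<in>Xk k. \<bar>f n y\<bar> \<ge> \<epsilon>}" using k by blast
    have i1: "{n. \<exists>y\<in>Xk k. \<bar>f n y\<bar> \<ge> \<epsilon>} \<in> I"
      using X(2) \<open>\<epsilon> > 0\<close> unfolding I_u_def by blast
    show "{n. \<bar>f n x\<bar> \<ge> \<epsilon>} \<in> I"
      by (rule ideal_sub[OF assms(1) i1 sub])
  qed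
qed

lemma Iu_un: assumes "ideal_on I" "I_u I A f" "I_u I B f" shows "I_u I (A \<union> B) f"
  unfolding I_u_def
proof (intro allI impI)
  fix \<epsilon> :: real assume "\<epsilon> > 0"
  have eq: "{n. \<exists>x\<in>A \<union> B. \<epsilon> \<le> \<bar>f n x\<bar>} = {n. \<exists>x\<in>A. \<epsilon> \<le> \<bar>f n x\<bar>} \<union> {n. \<exists>x\<in>B. \<epsilon> \<le> \<bar>f n x\<bar>}"
    by blast
  have i1: "{n. \<exists>x\<in>A. \<epsilon> \<le> \<bar>f n x\<bar>} \<in> I" using assms(2) \<open>\<epsilon> > 0\<close> unfolding I_u_def by blast
  have i2: "{n. \<exists>x\<in>B. \<epsilon> \<le> \<bar>f n x\<bar>} \<in> I" using assms(3) \<open>\<epsilon> > 0\<close> unfolding I_u_def by blast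
  show "{n. \<exists>x\<in>A \<union> B. \<epsilon> \<le> \<bar>f n x\<bar>} \<in> I"
    unfolding eq by (rule ideal_un[OF assms(1) i1 i2])
qed

lemma Iu_empty: assumes "ideal_on I" shows "I_u I {} f"
  unfolding I_u_def using ideal_fin[OF assms, of "{}"] by simp

lemma Iu_finU: fixes m :: nat assumes "ideal_on I" "\<forall>k. I_u I (Xk k) f" shows "I_u I (\<Union>k\<le>m. Xk k) f"
proof (induction m)
  case 0 then show ?case using assms by simp
next
  case (Suc m)
  have "(\<Union>k\<le>Suc m. Xk k) = (\<Union>k\<le>m. Xk k) \<union> Xk (Suc m)" by (auto simp: atMost_Suc)
  then show ?case using Iu_un[OF assms(1) Suc, of "Xk (Suc m)"] assms(2) by simp
qed

lemma su_qn: assumes I: "ideal_on I" and su: "I_sigma_u I S f" shows "I_qn I S f"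
proof -
  obtain Xk :: "nat \<Rightarrow> _ set" where X: "S = (\<Union>k. Xk k)" "\<forall>k. I_u I (Xk k) f"
    using su unfolding I_sigma_u_def by (elim exE conjE) (rule that; assumption)
  define B where "B m = {n. \<exists>x\<in>(\<Union>k\<le>m. Xk k). \<bar>f n x\<bar> \<ge> 1 / real (Suc m)}" for m
  have BI: "B m \<in> I" for m
    using Iu_finU[OF I X(2), of m] unfolding I_u_def B_def by simp
  have Bmono: "B m \<subseteq> B (Suc m)" for m
  proof
    fix n assume "n \<in> B m"
    then obtain x where x: "x \<in> (\<Union>k\<le>m. Xk k)" "\<bar>f n x\<bar> \<ge> 1 / real (Suc m)"
      unfolding B_def by blast
    have "1 / real (Suc (Suc m)) \<le> 1 / real (Suc m)" by (simp add: frac_le)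
    then have "\<bar>f n x\<bar> \<ge> 1 / real (Suc (Suc m))" using x(2) by linarith
    moreover have "x \<in> (\<Union>k\<le>Suc m. Xk k)" using x(1) by auto
    ultimately show "n \<in> B (Suc m)" unfolding B_def by blast
  qed
  have Bmono': "m \<le> M \<Longrightarrow> B m \<subseteq> B M" for m M
    using lift_Suc_mono_le[of B, OF Bmono] by blast
  define mu where "mu n = (LEAST m. n \<in> B m)" for n
  define e where "e n = (if \<exists>m. n \<in> B m then 1 / real (max 1 (mu n)) else 1 / real (Suc n))" for n
  have epos: "\<forall>n. e n > 0" unfolding e_def by (simp add: less_max_iff_disj)
  have econv: "I_conv0 I e" unfolding I_conv0_def
  proof (intro allI impI)
    fix \<epsilon> :: real assume ep: "\<epsilon> > 0"
    obtain M :: nat where M: "1 / \<epsilon> < real M" using reals_Archimedean2 by blast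
    have "{n. \<bar>e n\<bar> \<ge> \<epsilon>} \<subseteq> B M \<union> {..<M}"
    proof
      fix n assume "n \<in> {n. \<bar>e n\<bar> \<ge> \<epsilon>}"
      then have en: "e n \<ge> \<epsilon>" using epos by (simp add: less_imp_le)
      show "n \<in> B M \<union> {..<M}"
      proof (cases "\<exists>m. n \<in> B m")
        case True
        then have "n \<in> B (mu n)" unfolding mu_def by (rule LeastI_ex)
        have "1 / real (max 1 (mu n)) \<ge> \<epsilon>" using en True unfolding e_def by simp
        then have "real (max 1 (mu n)) \<le> 1 / \<epsilon>" using ep
          by (simp add: field_simps)
        then have "mu n \<le> M" using M by linarith
        then show ?thesis using Bmono' \<open>n \<in> B (mu n)\<close> by blast
      next
        case False
        then have "1 / real (Suc n) \<ge> \<epsilon>" using en unfolding e_def by simp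
        then have "real (Suc n) \<le> 1 / \<epsilon>" using ep by (simp add: field_simps)
        then have "n < M" using M by linarith
        then show ?thesis by simp
      qed
    qed
    moreover have "B M \<union> {..<M} \<in> I" using BI ideal_fin[OF I] ideal_un[OF I] by blast
    ultimately show "{n. \<bar>e n\<bar> \<ge> \<epsilon>} \<in> I" using ideal_sub[OF I] by blast
  qed
  have "\<forall>x\<in>S. {n. \<bar>f n x\<bar> \<ge> e n} \<in> I"
  proof
    fix x assume "x \<in> S"
    then obtain k where k: "x \<in> Xk k" using X by auto
    have "{n. \<bar>f n x\<bar> \<ge> e n} \<subseteq> B k"
    proof (rule ccontr)
      assume "\<not> ?thesis"
      then obtain n where n: "\<bar>f n x\<bar> \<ge> e n" "n \<notin> B k" by blast
      have small: "\<bar>f n x\<bar> < 1 / real (Suc m)" if "m \<ge> k" "n \<notin> B m" for m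
        using that k unfolding B_def by force
      show False
      proof (cases "\<exists>m. n \<in> B m")
        case True
        then have nb: "n \<in> B (mu n)" unfolding mu_def by (rule LeastI_ex)
        have "\<not> mu n \<le> k" using Bmono' nb n(2) by blast
        then obtain j where j: "mu n = Suc j" "j \<ge> k" by (metis Suc_le_D not_less_eq_eq)
        have "n \<notin> B j" using not_less_Least[of j "\<lambda>m. n \<in> B m"] j unfolding mu_def by simp
        then have "\<bar>f n x\<bar> < 1 / real (Suc j)" using small j by blast
        moreover have "e n = 1 / real (Suc j)" using True j unfolding e_def by simp
        ultimately show False using n(1) by simp
      next
        case False
        have "\<bar>f n x\<bar> \<le> 0"
        proof (rule ccontr)
          assume "\<not> \<bar>f n x\<bar> \<le> 0"
          then obtain m :: nat where m: "1 / \<bar>f n x\<bar> < real m" using reals_Archimedean2 by blast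
          have lt: "\<bar>f n x\<bar> < 1 / real (Suc (max m k))" using small False by simp
          have "0 < 1 / \<bar>f n x\<bar>" using \<open>\<not> \<bar>f n x\<bar> \<le> 0\<close> by simp
          then have m0: "real m > 0" using m by linarith
          have "1 / real (Suc (max m k)) \<le> 1 / real m"
            using m0 by (intro frac_le) auto
          moreover have "1 / real m < \<bar>f n x\<bar>" using m m0 \<open>\<not> \<bar>f n x\<bar> \<le> 0\<close>
            by (simp add: field_simps)
          ultimately show False using lt by linarith
        qed
        then show False using n(1) epos by (metis abs_ge_zero antisym not_le)
      qed
    qed
    then show "{n. \<bar>f n x\<bar> \<ge> e n} \<in> I" using BI ideal_sub[OF I] by blast
  qed
  note xs = this
  show ?thesis unfolding I_qn_def
    apply (rule exI[of _ e]) using epos econv xs by blast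
qed

definition LT :: "'a set \<Rightarrow> 'a \<Rightarrow> 'a topology" where
  "LT K p = topology (\<lambda>U. U \<subseteq> K \<and> (p \<in> U \<longrightarrow> countable (K - U)))"

lemma LT_istop: "istopology (\<lambda>U. U \<subseteq> K \<and> (p \<in> U \<longrightarrow> countable (K - U)))"
  unfolding istopology_def
proof (rule conjI; intro allI impI)
  fix S T assume S: "S \<subseteq> K \<and> (p \<in> S \<longrightarrow> countable (K - S))"
    and T: "T \<subseteq> K \<and> (p \<in> T \<longrightarrow> countable (K - T))"
  have e: "K - (S \<inter> T) = (K - S) \<union> (K - T)" by blast
  show "S \<inter> T \<subseteq> K \<and> (p \<in> S \<inter> T \<longrightarrow> countable (K - S \<inter> T))"
  proof (intro conjI impI)
    show "S \<inter> T \<subseteq> K" using S by blast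
    assume "p \<in> S \<inter> T"
    then have "countable (K - S)" "countable (K - T)" using S T by blast+
    then show "countable (K - S \<inter> T)" unfolding e by (rule countable_Un)
  qed
next
  fix \<K> :: "'a set set" assume H: "\<forall>U\<in>\<K>. U \<subseteq> K \<and> (p \<in> U \<longrightarrow> countable (K - U))"
  show "\<Union>\<K> \<subseteq> K \<and> (p \<in> \<Union>\<K> \<longrightarrow> countable (K - \<Union>\<K>))"
  proof (intro conjI impI)
    show "\<Union>\<K> \<subseteq> K" using H by blast
  next
    assume "p \<in> \<Union>\<K>"
    then obtain U where "U \<in> \<K>" "p \<in> U" by blast
    then have "countable (K - U)" using H by blast
    moreover have "K - \<Union>\<K> \<subseteq> K - U" using \<open>U \<in> \<K>\<close> by blast
    ultimately show "countable (K - \<Union>\<K>)" by (rule countable_subset[rotated])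
  qed
qed

lemma LT_open: "openin (LT K p) U \<longleftrightarrow> U \<subseteq> K \<and> (p \<in> U \<longrightarrow> countable (K - U))"
  unfolding LT_def by (simp only: topology_inverse'[OF LT_istop])

lemma LT_top: "topspace (LT K p) = K"
proof -
  have "openin (LT K p) K" by (simp add: LT_open)
  have "\<Union>{S. openin (LT K p) S} \<subseteq> K" unfolding LT_open by blast
  moreover have "K \<subseteq> \<Union>{S. openin (LT K p) S}" using \<open>openin (LT K p) K\<close> by blast
  ultimately show ?thesis unfolding topspace_def by (rule antisym)
qed

lemma LT_open_np: "U \<subseteq> K \<Longrightarrow> p \<notin> U \<Longrightarrow> openin (LT K p) U"
  unfolding LT_open by simp

lemma LT_normal: "normal_T2 (LT K p)"
  unfolding normal_T2_def
proof
  show "Hausdorff_space (LT K p)" unfolding Hausdorff_space_def LT_top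
  proof (intro allI impI)
    fix x y assume H: "x \<in> K \<and> y \<in> K \<and> x \<noteq> y"
    have xK: "x \<in> K" and yK: "y \<in> K" and xy: "x \<noteq> y" using H by simp_all
    have sep: "\<exists>U V. openin (LT K p) U \<and> openin (LT K p) V \<and> a \<in> U \<and> b \<in> V \<and> disjnt U V"
      if aK: "a \<in> K" and bK: "b \<in> K" and ab: "a \<noteq> b" and ap: "a \<noteq> p" for a b
    proof -
      have s1: "{a} \<subseteq> K" using aK by simp
      have s2: "p \<notin> {a}" using ap by simp
      have o1: "openin (LT K p) {a}" by (rule LT_open_np[OF s1 s2])
      have "K - (K - {a}) = {a}" using aK by blast
      then have "countable (K - (K - {a}))" by simp
      then have o2: "openin (LT K p) (K - {a})" unfolding LT_open by blast
      have t1: "b \<in> K - {a}" using bK ab by simp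
      have t2: "disjnt {a} (K - {a})" unfolding disjnt_def by blast
      have t0: "a \<in> {a}" by simp
      show ?thesis
        apply (rule exI[of _ "{a}"], rule exI[of _ "K - {a}"])
        using o1 o2 t0 t1 t2 by (intro conjI)
    qed
    show "\<exists>U V. openin (LT K p) U \<and> openin (LT K p) V \<and> x \<in> U \<and> y \<in> V \<and> disjnt U V"
    proof (cases "x = p")
      case False then show ?thesis by (rule sep[OF xK yK xy])
    next
      case True
      then have yp: "y \<noteq> p" using xy by simp
      have yx: "y \<noteq> x" using xy by simp
      obtain U V where UV: "openin (LT K p) U" "openin (LT K p) V" "y \<in> U" "x \<in> V" "disjnt U V"
        using sep[OF yK xK yx yp] by blast
      have UV2: "disjnt V U" using UV(5) by (simp add: disjnt_sym)
      show ?thesis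
        apply (rule exI[of _ V], rule exI[of _ U])
        using UV UV2 by (intro conjI)
    qed
  qed
next
  show "normal_space (LT K p)" unfolding normal_space_def closedin_def LT_top
  proof (intro allI impI)
    fix S T assume H: "(S \<subseteq> K \<and> openin (LT K p) (K - S)) \<and> (T \<subseteq> K \<and> openin (LT K p) (K - T)) \<and> disjnt S T"
    have SK: "S \<subseteq> K" and TK: "T \<subseteq> K" and oS: "openin (LT K p) (K - S)"
      and oT: "openin (LT K p) (K - T)" and d: "S \<inter> T = {}"
      using H unfolding disjnt_def by simp_all
    show "\<exists>U V. openin (LT K p) U \<and> openin (LT K p) V \<and> S \<subseteq> U \<and> T \<subseteq> V \<and> disjnt U V"
    proof (cases "p \<in> S")
      case False
      have o1: "openin (LT K p) S" by (rule LT_open_np[OF SK False])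
      have t1: "T \<subseteq> K - S" using TK d by blast
      have t2: "disjnt S (K - S)" unfolding disjnt_def by blast
      show ?thesis
        apply (rule exI[of _ S], rule exI[of _ "K - S"])
        using o1 oS t1 t2 by simp
    next
      case True
      then have nT: "p \<notin> T" using d by blast
      have o1: "openin (LT K p) T" by (rule LT_open_np[OF TK nT])
      have t1: "S \<subseteq> K - T" using SK d by blast
      have t2: "disjnt (K - T) T" unfolding disjnt_def by blast
      show ?thesis
        apply (rule exI[of _ "K - T"], rule exI[of _ T])
        using o1 oT t1 t2 by simp
    qed
  qed
qed

lemma LT_cont_countable:
  assumes c: "continuous_map (LT K p) euclideanreal g" and p: "p \<in> K"
  shows "countable {x\<in>K. g x \<noteq> g p}"
proof -
  have eq: "{x\<in>K. g x \<noteq> g p} = (\<Union>m. K - {x \<in> K. g x \<in> ball (g p) (1 / real (Suc m))})"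
  proof (intro equalityI subsetI)
    fix x assume "x \<in> {x\<in>K. g x \<noteq> g p}"
    then have x: "x \<in> K" "dist (g p) (g x) > 0" by auto
    then obtain m :: nat where m: "1 / dist (g p) (g x) < real m" using reals_Archimedean2 by blast
    have "0 < 1 / dist (g p) (g x)" using x(2) by simp
    then have m0: "real m > 0" using m by linarith
    have "1 / real (Suc m) \<le> 1 / real m" using m0 by (intro frac_le) auto
    moreover have "1 / real m < dist (g p) (g x)" using m m0 x(2) by (simp add: field_simps)
    ultimately have "1 / real (Suc m) < dist (g p) (g x)" by linarith
    then have "x \<in> K - {x \<in> K. g x \<in> ball (g p) (1 / real (Suc m))}" using x by (simp add: mem_ball)
    then show "x \<in> (\<Union>m. K - {x \<in> K. g x \<in> ball (g p) (1 / real (Suc m))})" by blast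
  next
    fix x assume "x \<in> (\<Union>m. K - {x \<in> K. g x \<in> ball (g p) (1 / real (Suc m))})"
    then obtain m where xm: "x \<in> K" "g x \<notin> ball (g p) (1 / real (Suc m))" by blast
    have "g p \<in> ball (g p) (1 / real (Suc m))" by simp
    then show "x \<in> {x\<in>K. g x \<noteq> g p}" using xm by auto
  qed
  have cnt: "countable (K - {x \<in> K. g x \<in> ball (g p) (1 / real (Suc m))})" for m
  proof -
    have o: "openin (LT K p) {x \<in> topspace (LT K p). g x \<in> ball (g p) (1 / real (Suc m))}"
      by (rule openin_continuous_map_preimage[OF c]) simp
    have pin: "p \<in> {x \<in> K. g x \<in> ball (g p) (1 / real (Suc m))}" using p by simp
    from o have "openin (LT K p) {x \<in> K. g x \<in> ball (g p) (1 / real (Suc m))}"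
      unfolding LT_top .
    then show ?thesis using pin unfolding LT_open by blast
  qed
  show ?thesis unfolding eq by (rule countable_UN[OF _ cnt]) simp
qed

lemma LT_p_su:
  assumes I: "ideal_on I" and pK: "K \<noteq> {} \<Longrightarrow> p \<in> K"
    and c: "\<forall>n. continuous_map (LT K p) euclideanreal (f n)" and pt: "I_p I K f"
  shows "I_sigma_u I K f"
proof -
  define D where "D = {x\<in>K. \<exists>n. f n x \<noteq> f n p}"
  have DK: "D \<subseteq> K" unfolding D_def by blast
  have cD: "countable D"
  proof (cases "K = {}")
    case True then show ?thesis unfolding D_def by simp
  next
    case False
    have eqD: "D = (\<Union>n. {x\<in>K. f n x \<noteq> f n p})" unfolding D_def by blast
    have cn: "countable {x\<in>K. f n x \<noteq> f n p}" for n
      by (rule LT_cont_countable[OF _ pK[OF False]]) (use c in blast)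
    show ?thesis unfolding eqD by (rule countable_UN[OF _ cn]) simp
  qed
  define Xk where "Xk k = (if k = 0 then K - D else {from_nat_into D (k - 1)} \<inter> D)" for k
  have X0: "Xk 0 = K - D" unfolding Xk_def by simp
  have XS: "Xk (Suc n) = {from_nat_into D n} \<inter> D" for n unfolding Xk_def by simp
  have XsubK: "Xk k \<subseteq> K" for k
    by (cases k) (use DK in \<open>simp_all add: X0 XS, blast+\<close>)
  have KU: "K = (\<Union>k. Xk k)"
  proof (intro equalityI subsetI)
    fix x assume x: "x \<in> K"
    show "x \<in> (\<Union>k. Xk k)"
    proof (cases "x \<in> D")
      case True
      then obtain n where "from_nat_into D n = x" using from_nat_into_surj[OF cD True] by blast
      then have "x \<in> Xk (Suc n)" using True unfolding XS by simp
      then show ?thesis by blast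
    next
      case False then have "x \<in> Xk 0" using x unfolding X0 by simp
      then show ?thesis by blast
    qed
  next
    fix x assume "x \<in> (\<Union>k. Xk k)"
    then obtain k where "x \<in> Xk k" by blast
    then show "x \<in> K" using XsubK by blast
  qed
  have Iu: "I_u I (Xk k) f" for k
    unfolding I_u_def
  proof (intro allI impI)
    fix \<epsilon> :: real assume ep: "\<epsilon> > 0"
    show "{n. \<exists>x\<in>Xk k. \<epsilon> \<le> \<bar>f n x\<bar>} \<in> I"
    proof (cases "Xk k = {}")
      case True then show ?thesis using ideal_fin[OF I, of "{}"] by simp
    next
      case False
      then obtain y where y: "y \<in> Xk k" by blast
      have yK: "y \<in> K" using XsubK y by blast
      have "\<exists>z\<in>K. {n. \<exists>x\<in>Xk k. \<epsilon> \<le> \<bar>f n x\<bar>} \<subseteq> {n. \<epsilon> \<le> \<bar>f n z\<bar>}"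
      proof (cases k)
        case 0
        have pK': "p \<in> K" using pK yK by blast
        have "\<forall>x\<in>Xk k. \<forall>n. f n x = f n p" unfolding 0 X0 D_def by blast
        then have "{n. \<exists>x\<in>Xk k. \<epsilon> \<le> \<bar>f n x\<bar>} \<subseteq> {n. \<epsilon> \<le> \<bar>f n p\<bar>}" by force
        then show ?thesis using pK' by blast
      next
        case (Suc j)
        have "y \<in> {from_nat_into D j} \<inter> D" using y unfolding Suc XS .
        then have "Xk k = {y}" unfolding Suc XS by blast
        then have "{n. \<exists>x\<in>Xk k. \<epsilon> \<le> \<bar>f n x\<bar>} \<subseteq> {n. \<epsilon> \<le> \<bar>f n y\<bar>}" by simp
        then show ?thesis using yK by blast
      qed
      then obtain z where z: "z \<in> K" "{n. \<exists>x\<in>Xk k. \<epsilon> \<le> \<bar>f n x\<bar>} \<subseteq> {n. \<epsilon> \<le> \<bar>f n z\<bar>}" by blast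
      have zI: "{n. \<epsilon> \<le> \<bar>f n z\<bar>} \<in> I" using pt z(1) ep unfolding I_p_def I_conv0_def by blast
      show ?thesis by (rule ideal_sub[OF I zI z(2)])
    qed
  qed
  show ?thesis unfolding I_sigma_u_def
    apply (rule exI[of _ Xk]) by (intro conjI allI KU Iu)
qed

theorem corollary6p5:
  fixes I :: "nat set set" and K :: "'a set"
  assumes "ideal_on I"
  shows "(\<exists>X :: 'a topology. topspace X \<approx> K \<and> in_class I_p I_sigma_u I X)
       \<and> (\<exists>X :: 'a topology. topspace X \<approx> K \<and> in_class I_p I_qn I X)
       \<and> (\<exists>X :: 'a topology. topspace X \<approx> K \<and> in_class I_qn I_sigma_u I X)"
proof -
  define p where "p = (SOME p. p \<in> K)"
  have pK: "K \<noteq> {} \<Longrightarrow> p \<in> K" unfolding p_def by (simp add: some_in_eq)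
  define X where "X = LT K p"
  have top: "topspace X \<approx> K" unfolding X_def LT_top by simp
  have key: "I_sigma_u I (topspace X) f"
    if c: "\<forall>n. continuous_map X euclideanreal (f n)" and pt: "I_p I (topspace X) f" for f
  proof -
    have "I_sigma_u I K f"
      by (rule LT_p_su[OF assms pK]) (use c pt in \<open>simp_all add: X_def LT_top\<close>)
    then show ?thesis by (simp add: X_def LT_top)
  qed
  have nX: "normal_T2 X" unfolding X_def by (rule LT_normal)
  have A: "in_class I_p I_sigma_u I X"
    unfolding in_class_def
  proof (intro conjI allI impI)
    fix f :: "nat \<Rightarrow> 'a \<Rightarrow> real" assume c: "\<forall>n. continuous_map X euclideanreal (f n)"
    show "I_p I (topspace X) f = I_sigma_u I (topspace X) f"
    proof
      assume h: "I_p I (topspace X) f"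
      show "I_sigma_u I (topspace X) f" by (rule key[OF c h])
    next
      assume h: "I_sigma_u I (topspace X) f"
      show "I_p I (topspace X) f" by (rule su_p[OF assms h])
    qed
  qed (rule nX)
  have B: "in_class I_p I_qn I X"
    unfolding in_class_def
  proof (intro conjI allI impI)
    fix f :: "nat \<Rightarrow> 'a \<Rightarrow> real" assume c: "\<forall>n. continuous_map X euclideanreal (f n)"
    show "I_p I (topspace X) f = I_qn I (topspace X) f"
    proof
      assume h: "I_p I (topspace X) f"
      show "I_qn I (topspace X) f" by (rule su_qn[OF assms key[OF c h]])
    next
      assume h: "I_qn I (topspace X) f"
      show "I_p I (topspace X) f" by (rule qn_p[OF assms h])
    qed
  qed (rule nX)
  have C: "in_class I_qn I_sigma_u I X"
    unfolding in_class_def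
  proof (intro conjI allI impI)
    fix f :: "nat \<Rightarrow> 'a \<Rightarrow> real" assume c: "\<forall>n. continuous_map X euclideanreal (f n)"
    show "I_qn I (topspace X) f = I_sigma_u I (topspace X) f"
    proof
      assume h: "I_qn I (topspace X) f"
      show "I_sigma_u I (topspace X) f" by (rule key[OF c qn_p[OF assms h]])
    next
      assume h: "I_sigma_u I (topspace X) f"
      show "I_qn I (topspace X) f" by (rule su_qn[OF assms h])
    qed
  qed (rule nX)
  show ?thesis using top A B C by blast
qed

end
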